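(* Let $p$ be a prime, let $G,H$ be finite groups, and let $U\leq G\times H$ be a subdirect product. Write $K=k_1(U)$ and $q(U)=G/K$. Then $U$ is $p$-extensible if one of the following conditions holds: (i) the $p$-primary part of the Schur multiplier $M(q(U))=H_2(q(U),\mathbb{Z})$ is trivial; (ii) the $p$-primary component of the coinflation map $\alpha: H_2(G,\mathbb{Z})\to H_2(G/K,\mathbb{Z})$ is surjective.
   Context: For finite groups $G,H$ and $U\leq G\times H$: $p_1(U)=\{g\in G:\exists h,(g,h)\in U\}$, $p_2(U)=\{h\in H:\exists g,(g,h)\in U\}$, $k_1(U)=\{g\in G:(g,1)\in U\}$, $k_2(U)=\{h\in H:(1,h)\in U\}$. $U$ is a subdirect product if $p_1(U)=G$ and $p_2(U)=H$. The Goursat quotient is $q(U)=p_1(U)/k_1(U)$ (isomorphic to $p_2(U)/k_2(U)$). An abelian group $A$ satisfies the Hypothesis (with set of primes $\pi$) if there is a unique set of primes $\pi$ such that for every $n\in\mathbb{N}$ the $n$-torsion part of $A$ is cyclic of order $n_\pi$ (the $\pi$-part of $n$). $U$ is $A$-extensible if every homomorphism $U\to A$ extends to a homomorphism $G\times H\to A$. $U$ is $p$-extensible if it is $A$-extensible for every abelian group $A$ satisfying the Hypothesis with $\pi=\{p\}$. The coinflation map is the first map $\alpha$ in the five-term exact sequence $H_2(G)\xrightarrow{\alpha} H_2(G/K)\to H_1(K)_{G/K}\to H_1(G)\to H_1(G/K)\to 0$ of the extension $1\to K\to G\to G/K\to 1$ (induced by the projection $G\to G/K$); homology is with integer coefficients.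 *)

theory Defs
  imports "HOL-Algebra.Algebra" "HOL-Computational_Algebra.Primes"
begin

definition p1 :: "('g \<times> 'h) set \<Rightarrow> 'g set" where
  "p1 U = {g. \<exists>h. (g, h) \<in> U}"

definition p2 :: "('g \<times> 'h) set \<Rightarrow> 'h set" where
  "p2 U = {h. \<exists>g. (g, h) \<in> U}"

definition k1 :: "('h, 'y) monoid_scheme \<Rightarrow> ('g \<times> 'h) set \<Rightarrow> 'g set" where
  "k1 H U = {g. (g, \<one>\<^bsub>H\<^esub>) \<in> U}"

definition k2 :: "('g, 'x) monoid_scheme \<Rightarrow> ('g \<times> 'h) set \<Rightarrow> 'h set" where
  "k2 G U = {h. (\<one>\<^bsub>G\<^esub>, h) \<in> U}"

definition subdirect_product ::
  "('g, 'x) monoid_scheme \<Rightarrow> ('h, 'y) monoid_scheme \<Rightarrow> ('g \<times> 'h) set \<Rightarrow> bool" where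
  "subdirect_product G H U \<longleftrightarrow>
     subgroup U (G \<times>\<times> H) \<and> p1 U = carrier G \<and> p2 U = carrier H"

text \<open>Chains C_n(Q) = free abelian group on Q^n, realised as integer-valued functions
  on n-tuples vanishing outside carrier Q^n (Q finite). Trivial coefficients Z.\<close>

definition chains2 :: "('q, 'z) monoid_scheme \<Rightarrow> ('q \<times> 'q \<Rightarrow> int) set" where
  "chains2 Q = {c. \<forall>x. x \<notin> carrier Q \<times> carrier Q \<longrightarrow> c x = 0}"

definition chains3 :: "('q, 'z) monoid_scheme \<Rightarrow> ('q \<times> 'q \<times> 'q \<Rightarrow> int) set" where
  "chains3 Q = {d. \<forall>x. x \<notin> carrier Q \<times> carrier Q \<times> carrier Q \<longrightarrow> d x = 0}"

definition bd2 :: "('q, 'z) monoid_scheme \<Rightarrow> ('q \<times> 'q \<Rightarrow> int) \<Rightarrow> 'q \<Rightarrow> int" where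
  "bd2 Q c x = (\<Sum>(g, h) \<in> carrier Q \<times> carrier Q.
      c (g, h) * (of_bool (h = x) - of_bool (g \<otimes>\<^bsub>Q\<^esub> h = x) + of_bool (g = x)))"

definition bd3 :: "('q, 'z) monoid_scheme \<Rightarrow> ('q \<times> 'q \<times> 'q \<Rightarrow> int) \<Rightarrow> 'q \<times> 'q \<Rightarrow> int" where
  "bd3 Q d y = (\<Sum>(a, b, c) \<in> carrier Q \<times> carrier Q \<times> carrier Q.
      d (a, b, c) * (of_bool ((b, c) = y) - of_bool ((a \<otimes>\<^bsub>Q\<^esub> b, c) = y)
                     + of_bool ((a, b \<otimes>\<^bsub>Q\<^esub> c) = y) - of_bool ((a, b) = y)))"

definition cycles2 :: "('q, 'z) monoid_scheme \<Rightarrow> ('q \<times> 'q \<Rightarrow> int) set" where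
  "cycles2 Q = {c \<in> chains2 Q. bd2 Q c = (\<lambda>_. 0)}"

definition boundaries2 :: "('q, 'z) monoid_scheme \<Rightarrow> ('q \<times> 'q \<Rightarrow> int) set" where
  "boundaries2 Q = bd3 Q ` chains3 Q"

text \<open>H_2(Q) = cycles2 Q / boundaries2 Q; two cycles represent the same class iff they are homologous.\<close>
definition homologous2 :: "('q, 'z) monoid_scheme \<Rightarrow> ('q \<times> 'q \<Rightarrow> int) \<Rightarrow> ('q \<times> 'q \<Rightarrow> int) \<Rightarrow> bool" where
  "homologous2 Q z w \<longleftrightarrow> (\<lambda>x. z x - w x) \<in> boundaries2 Q"

definition p_primary_cycle2 :: "nat \<Rightarrow> ('q, 'z) monoid_scheme \<Rightarrow> ('q \<times> 'q \<Rightarrow> int) \<Rightarrow> bool" where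
  "p_primary_cycle2 p Q z \<longleftrightarrow>
     z \<in> cycles2 Q \<and> (\<exists>n::nat. (\<lambda>x. int p ^ n * z x) \<in> boundaries2 Q)"

definition schur_p_part_trivial :: "nat \<Rightarrow> ('q, 'z) monoid_scheme \<Rightarrow> bool" where
  "schur_p_part_trivial p Q \<longleftrightarrow> (\<forall>z. p_primary_cycle2 p Q z \<longrightarrow> z \<in> boundaries2 Q)"

definition chain_map2 ::
  "('g, 'x) monoid_scheme \<Rightarrow> ('g \<Rightarrow> 'q) \<Rightarrow> ('g \<times> 'g \<Rightarrow> int) \<Rightarrow> 'q \<times> 'q \<Rightarrow> int" where
  "chain_map2 G f c = (\<lambda>(a, b). \<Sum>(g, h) \<in> {(g, h) \<in> carrier G \<times> carrier G. f g = a \<and> f h = b}. c (g, h))"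

definition coinflation_p_surjective :: "nat \<Rightarrow> ('g, 'x) monoid_scheme \<Rightarrow> 'g set \<Rightarrow> bool" where
  "coinflation_p_surjective p G K \<longleftrightarrow>
     (\<forall>w. p_primary_cycle2 p (G Mod K) w \<longrightarrow>
        (\<exists>z. p_primary_cycle2 p G z \<and>
             homologous2 (G Mod K) (chain_map2 G (\<lambda>g. K #>\<^bsub>G\<^esub> g) z) w))"

definition torsion_part :: "('a, 'b) monoid_scheme \<Rightarrow> nat \<Rightarrow> 'a set" where
  "torsion_part A n = {a \<in> carrier A. a [^]\<^bsub>A\<^esub> n = \<one>\<^bsub>A\<^esub>}"

text \<open>The Hypothesis with \<pi> = {p}: every n-torsion part is cyclic of order n_p.
  (Uniqueness of \<pi> is then automatic.)\<close>
definition hypothesis_p :: "nat \<Rightarrow> ('a, 'b) monoid_scheme \<Rightarrow> bool" where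
  "hypothesis_p p A \<longleftrightarrow>
     (\<forall>n::nat. n > 0 \<longrightarrow>
        finite (torsion_part A n) \<and> card (torsion_part A n) = p ^ multiplicity p n \<and>
        (\<exists>x \<in> torsion_part A n. torsion_part A n = generate A {x}))"

definition A_extensible ::
  "('g, 'x) monoid_scheme \<Rightarrow> ('h, 'y) monoid_scheme \<Rightarrow> ('g \<times> 'h) set \<Rightarrow> ('a, 'b) monoid_scheme \<Rightarrow> bool" where
  "A_extensible G H U A \<longleftrightarrow>
     (\<forall>f \<in> hom ((G \<times>\<times> H)\<lparr>carrier := U\<rparr>) A.
        \<exists>F \<in> hom (G \<times>\<times> H) A. \<forall>u \<in> U. F u = f u)"

text \<open>p-extensible: A-extensible for every abelian group A (with elements of type 'a)
  satisfying the Hypothesis with \<pi> = {p}. The theorem is stated for an arbitrary type 'a.\<close>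
definition p_extensible ::
  "nat \<Rightarrow> ('g, 'x) monoid_scheme \<Rightarrow> ('h, 'y) monoid_scheme \<Rightarrow> ('g \<times> 'h) set \<Rightarrow> 'a itself \<Rightarrow> bool" where
  "p_extensible p G H U _ \<longleftrightarrow>
     (\<forall>A :: 'a monoid. comm_group A \<and> hypothesis_p p A \<longrightarrow> A_extensible G H U A)"

end

theory Submission
  imports Defs "HOL-Algebra.Multiplicative_Group"
begin

lemma sum_delta_outer:
  assumes "finite S" "g \<in> S"
  shows "(\<Sum>a\<in>S. \<Sum>b\<in>B. of_bool (g = a) * (F a b :: int)) = (\<Sum>b\<in>B. F g b)"
proof -
  have "(\<Sum>a\<in>S. \<Sum>b\<in>B. of_bool (g = a) * (F a b :: int)) = (\<Sum>a\<in>S. if g = a then (\<Sum>b\<in>B. F a b) else 0)"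
    by (rule sum.cong[OF refl]) auto
  also have "\<dots> = (\<Sum>b\<in>B. F g b)" using assms by (simp add: sum.delta)
  finally show ?thesis .
qed



lemma bd2_outside:
  assumes "group Q" "y \<notin> carrier Q"
  shows "bd2 Q c y = 0"
  unfolding bd2_def using assms by (intro sum.neutral) (auto simp: group.is_monoid monoid.m_closed)

lemma bd2_lin:
  assumes "finite (carrier Q)"
  shows "bd2 Q (\<lambda>i. x i - k * z i) y = bd2 Q x y - k * bd2 Q z y"
  unfolding bd2_def
  by (simp add: case_prod_beta sum_subtractf sum_distrib_left algebra_simps)

lemma delta_sum:
  fixes E :: "'a \<Rightarrow> int"
  assumes "finite S" "c \<in> S"
  shows "(\<Sum>y\<in>S. E y * of_bool (c = y)) = E c"
proof -
  have "(\<Sum>y\<in>S. E y * of_bool (c = y)) = (\<Sum>y\<in>S. if c = y then E y else 0)"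
    by (rule sum.cong) auto
  also have "\<dots> = E c" using assms by (simp add: sum.delta)
  finally show ?thesis .
qed

lemma bd2_pair:
  assumes "group Q" "finite (carrier Q)"
  shows "(\<Sum>y\<in>carrier Q. E y * bd2 Q z y) =
     (\<Sum>(g,h)\<in>carrier Q \<times> carrier Q. z (g,h) * (E h - E (g \<otimes>\<^bsub>Q\<^esub> h) + E g))"
proof -
  have "(\<Sum>y\<in>carrier Q. E y * bd2 Q z y) =
     (\<Sum>y\<in>carrier Q. \<Sum>gh\<in>carrier Q \<times> carrier Q. z gh * (E y * of_bool (snd gh = y) - E y * of_bool (fst gh \<otimes>\<^bsub>Q\<^esub> snd gh = y) + E y * of_bool (fst gh = y)))"
    unfolding bd2_def by (simp add: case_prod_beta sum_distrib_left algebra_simps)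
  also have "\<dots> = (\<Sum>gh\<in>carrier Q \<times> carrier Q. \<Sum>y\<in>carrier Q. z gh * (E y * of_bool (snd gh = y) - E y * of_bool (fst gh \<otimes>\<^bsub>Q\<^esub> snd gh = y) + E y * of_bool (fst gh = y)))"
    by (rule sum.swap)
  also have "\<dots> = (\<Sum>gh\<in>carrier Q \<times> carrier Q. z gh * (E (snd gh) - E (fst gh \<otimes>\<^bsub>Q\<^esub> snd gh) + E (fst gh)))"
  proof (rule sum.cong[OF refl])
    fix gh assume gh: "gh \<in> carrier Q \<times> carrier Q"
    then have m: "fst gh \<otimes>\<^bsub>Q\<^esub> snd gh \<in> carrier Q" using assms(1) by (auto intro: monoid.m_closed group.is_monoid)
    show "(\<Sum>y\<in>carrier Q. z gh * (E y * of_bool (snd gh = y) - E y * of_bool (fst gh \<otimes>\<^bsub>Q\<^esub> snd gh = y) + E y * of_bool (fst gh = y))) = z gh * (E (snd gh) - E (fst gh \<otimes>\<^bsub>Q\<^esub> snd gh) + E (fst gh))"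
      using gh m assms(2) by (simp add: sum_distrib_left[symmetric] sum.distrib sum_subtractf delta_sum mem_Times_iff)
  qed
  finally show ?thesis by (simp add: case_prod_beta)
qed

lemma bd3_pair:
  assumes "group Q" "finite (carrier Q)"
  shows "(\<Sum>y\<in>carrier Q \<times> carrier Q. V y * bd3 Q d y) =
     (\<Sum>(a,b,c)\<in>carrier Q \<times> carrier Q \<times> carrier Q. d (a,b,c) *
        (V (b,c) - V (a \<otimes>\<^bsub>Q\<^esub> b, c) + V (a, b \<otimes>\<^bsub>Q\<^esub> c) - V (a,b)))"
proof -
  let ?S = "carrier Q \<times> carrier Q"
  let ?T = "carrier Q \<times> carrier Q \<times> carrier Q"
  have "(\<Sum>y\<in>?S. V y * bd3 Q d y) =
     (\<Sum>y\<in>?S. \<Sum>t\<in>?T. d t * (V y * of_bool ((fst (snd t), snd (snd t)) = y)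
        - V y * of_bool ((fst t \<otimes>\<^bsub>Q\<^esub> fst (snd t), snd (snd t)) = y)
        + V y * of_bool ((fst t, fst (snd t) \<otimes>\<^bsub>Q\<^esub> snd (snd t)) = y)
        - V y * of_bool ((fst t, fst (snd t)) = y)))"
    unfolding bd3_def by (simp add: case_prod_beta sum_distrib_left algebra_simps)
  also have "\<dots> = (\<Sum>t\<in>?T. \<Sum>y\<in>?S. d t * (V y * of_bool ((fst (snd t), snd (snd t)) = y)
        - V y * of_bool ((fst t \<otimes>\<^bsub>Q\<^esub> fst (snd t), snd (snd t)) = y)
        + V y * of_bool ((fst t, fst (snd t) \<otimes>\<^bsub>Q\<^esub> snd (snd t)) = y)
        - V y * of_bool ((fst t, fst (snd t)) = y)))"
    by (rule sum.swap)
  also have "\<dots> = (\<Sum>t\<in>?T. d t * (V (fst (snd t), snd (snd t)) - V (fst t \<otimes>\<^bsub>Q\<^esub> fst (snd t), snd (snd t))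
        + V (fst t, fst (snd t) \<otimes>\<^bsub>Q\<^esub> snd (snd t)) - V (fst t, fst (snd t))))"
  proof (rule sum.cong[OF refl])
    fix t assume t: "t \<in> ?T"
    then have m: "fst t \<otimes>\<^bsub>Q\<^esub> fst (snd t) \<in> carrier Q" "fst (snd t) \<otimes>\<^bsub>Q\<^esub> snd (snd t) \<in> carrier Q"
      using assms(1) by (auto intro: monoid.m_closed group.is_monoid)
    show "(\<Sum>y\<in>?S. d t * (V y * of_bool ((fst (snd t), snd (snd t)) = y)
        - V y * of_bool ((fst t \<otimes>\<^bsub>Q\<^esub> fst (snd t), snd (snd t)) = y)
        + V y * of_bool ((fst t, fst (snd t) \<otimes>\<^bsub>Q\<^esub> snd (snd t)) = y)
        - V y * of_bool ((fst t, fst (snd t)) = y))) = d t * (V (fst (snd t), snd (snd t)) - V (fst t \<otimes>\<^bsub>Q\<^esub> fst (snd t), snd (snd t))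
        + V (fst t, fst (snd t) \<otimes>\<^bsub>Q\<^esub> snd (snd t)) - V (fst t, fst (snd t)))"
      using t m assms(2) by (simp add: sum_distrib_left[symmetric] sum.distrib sum_subtractf delta_sum mem_Times_iff)
  qed
  finally show ?thesis by (simp add: case_prod_beta)
qed

lemma sum_triple:
  "(\<Sum>t\<in>A \<times> B \<times> C. f t) = (\<Sum>a\<in>A. \<Sum>b\<in>B. \<Sum>c\<in>C. f (a,b,c))"
  by (simp add: sum.cartesian_product)

lemma count_solution:
  assumes "group Q" "finite (carrier Q)" "b \<in> carrier Q" "y \<in> carrier Q"
  shows "(\<Sum>c\<in>carrier Q. (of_bool (b \<otimes>\<^bsub>Q\<^esub> c = y) :: int)) = 1"
proof -
  interpret group Q by fact
  have "(\<Sum>c\<in>carrier Q. (of_bool (b \<otimes>\<^bsub>Q\<^esub> c = y) :: int)) = (\<Sum>c\<in>carrier Q. 1 * of_bool (inv\<^bsub>Q\<^esub> b \<otimes>\<^bsub>Q\<^esub> y = c))"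
    using assms(3,4) by (intro sum.cong refl) (auto simp flip: m_assoc)
  also have "\<dots> = 1" using assms by (intro delta_sum) auto
  finally show ?thesis .
qed

lemma cycle_mult_boundary:
  assumes "group Q" "finite (carrier Q)" "x \<in> cycles2 Q"
  shows "(\<lambda>y. int (card (carrier Q)) * x y) =
     bd3 Q (\<lambda>(a,b,c). if (a,b,c) \<in> carrier Q \<times> carrier Q \<times> carrier Q then - x (a,b) else 0)"
    (is "_ = bd3 Q ?d")
proof
  fix y
  have xc: "x \<in> chains2 Q" and bx: "bd2 Q x = (\<lambda>_. 0)" using assms(3) by (auto simp: cycles2_def)
  let ?N = "int (card (carrier Q))"
  show "?N * x y = bd3 Q ?d y"
  proof (cases "y \<in> carrier Q \<times> carrier Q")
    case False
    then have "x y = 0" using xc unfolding chains2_def by blast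
    moreover have "bd3 Q ?d y = 0"
      unfolding bd3_def using False assms(1)
      by (intro sum.neutral) (auto simp: group.is_monoid monoid.m_closed)
    ultimately show ?thesis by simp
  next
    case True
    then obtain y1 y2 where y: "y = (y1,y2)" "y1 \<in> carrier Q" "y2 \<in> carrier Q" by auto
    have "bd3 Q ?d y = (\<Sum>a\<in>carrier Q. \<Sum>b\<in>carrier Q. \<Sum>c\<in>carrier Q.
        - x (a,b) * (of_bool (b = y1) * of_bool (c = y2) - of_bool (a \<otimes>\<^bsub>Q\<^esub> b = y1) * of_bool (c = y2)
          + of_bool (a = y1) * of_bool (b \<otimes>\<^bsub>Q\<^esub> c = y2) - of_bool (a = y1) * of_bool (b = y2)))"
      unfolding bd3_def sum_triple using y by (intro sum.cong refl) auto
    also have "\<dots> = (\<Sum>a\<in>carrier Q. \<Sum>b\<in>carrier Q.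
        - x (a,b) * (of_bool (b = y1) - of_bool (a \<otimes>\<^bsub>Q\<^esub> b = y1)
          + of_bool (a = y1) - ?N * of_bool (a = y1) * of_bool (b = y2)))"
    proof (intro sum.cong refl)
      fix a b assume ab: "a \<in> carrier Q" "b \<in> carrier Q"
      have c1: "(\<Sum>c\<in>carrier Q. (of_bool (c = y2) :: int)) = 1"
        using delta_sum[of "carrier Q" y2 "\<lambda>_. 1"] y assms(2) by (simp add: eq_commute)
      show "(\<Sum>c\<in>carrier Q. - x (a,b) * (of_bool (b = y1) * of_bool (c = y2) - of_bool (a \<otimes>\<^bsub>Q\<^esub> b = y1) * of_bool (c = y2)
          + of_bool (a = y1) * of_bool (b \<otimes>\<^bsub>Q\<^esub> c = y2) - of_bool (a = y1) * of_bool (b = y2))) =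
          - x (a,b) * (of_bool (b = y1) - of_bool (a \<otimes>\<^bsub>Q\<^esub> b = y1)
          + of_bool (a = y1) - ?N * of_bool (a = y1) * of_bool (b = y2))"
        using c1 count_solution[OF assms(1,2) ab(2) y(3)]
        by (simp add: sum_distrib_left[symmetric] sum.distrib sum_subtractf sum_distrib_right[symmetric] algebra_simps)
    qed
    also have "\<dots> = - bd2 Q x y1 + ?N * (\<Sum>a\<in>carrier Q. \<Sum>b\<in>carrier Q. x (a,b) * of_bool ((a,b) = y))"
      unfolding bd2_def sum.cartesian_product[symmetric] using y
      by (simp add: sum_distrib_left sum_negf sum.distrib sum_subtractf algebra_simps of_bool_conj)
    also have "(\<Sum>a\<in>carrier Q. \<Sum>b\<in>carrier Q. x (a,b) * of_bool ((a,b) = y)) = x y"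
    proof -
      have "(\<Sum>a\<in>carrier Q. \<Sum>b\<in>carrier Q. x (a,b) * of_bool ((a,b) = y)) = (\<Sum>z\<in>carrier Q \<times> carrier Q. x z * of_bool (y = z))"
        unfolding sum.cartesian_product by (intro sum.cong) auto
      also have "\<dots> = x y" using delta_sum[of "carrier Q \<times> carrier Q" y x] y assms(2) by simp
      finally show ?thesis .
    qed
    finally show ?thesis using bx by simp
  qed
qed


lemma bd2_scale:
  "bd2 Q (\<lambda>i. c * x i) y = c * bd2 Q x y"
  unfolding bd2_def by (simp add: case_prod_beta sum_distrib_left algebra_simps)

lemma sum_mult_comm: "(\<Sum>b\<in>B. c * f b) = (\<Sum>b\<in>B. f b) * (c::int)"
  by (simp add: sum_distrib_left mult.commute)

lemma bd2_gen:
  assumes "group Q" "finite (carrier Q)" "g \<in> carrier Q" "y \<in> carrier Q"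
  shows "bd2 Q (\<lambda>(a,b). of_bool (a = g \<and> b \<in> carrier Q)) y = (if y = g then int (card (carrier Q)) else 0)"
proof -
  have "bd2 Q (\<lambda>(a,b). of_bool (a = g \<and> b \<in> carrier Q)) y =
      (\<Sum>a\<in>carrier Q. \<Sum>b\<in>carrier Q. of_bool (g = a) * (of_bool (b = y) - of_bool (a \<otimes>\<^bsub>Q\<^esub> b = y) + of_bool (a = y)))"
    unfolding bd2_def sum.cartesian_product by (intro sum.cong refl) auto
  also have "\<dots> = (\<Sum>b\<in>carrier Q. of_bool (b = y) - of_bool (g \<otimes>\<^bsub>Q\<^esub> b = y) + of_bool (g = y))"
    by (rule sum_delta_outer[OF assms(2,3)])
  also have "\<dots> = 1 - 1 + int (card (carrier Q)) * of_bool (g = y)"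
    using count_solution[OF assms(1,2,3,4)] delta_sum[of "carrier Q" y "\<lambda>_. 1"] assms
    by (simp add: sum.distrib sum_subtractf eq_commute)
  finally show ?thesis by auto
qed

lemma chain_map_pair:
  assumes "finite (carrier G)" "finite S" "\<And>g. g \<in> carrier G \<Longrightarrow> f g \<in> S"
  shows "(\<Sum>q\<in>S \<times> S. V q * chain_map2 G f z q) =
     (\<Sum>x\<in>carrier G \<times> carrier G. z x * V (f (fst x), f (snd x)))"
proof -
  let ?F = "\<lambda>x. (f (fst x), f (snd x))"
  have "(\<Sum>q\<in>S \<times> S. V q * chain_map2 G f z q) =
     (\<Sum>q\<in>S \<times> S. sum (\<lambda>x. z x * V (?F x)) {x. x \<in> carrier G \<times> carrier G \<and> ?F x = q})"
  proof (rule sum.cong[OF refl])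
    fix q assume "q \<in> S \<times> S"
    obtain a b where q: "q = (a,b)" by (cases q)
    have "{(g, h) \<in> carrier G \<times> carrier G. f g = a \<and> f h = b} = {x. x \<in> carrier G \<times> carrier G \<and> ?F x = q}"
      using q by auto
    then show "V q * chain_map2 G f z q = sum (\<lambda>x. z x * V (?F x)) {x. x \<in> carrier G \<times> carrier G \<and> ?F x = q}"
      unfolding chain_map2_def q by (simp add: sum_distrib_left case_prod_beta algebra_simps)
  qed
  also have "\<dots> = (\<Sum>x\<in>carrier G \<times> carrier G. z x * V (?F x))"
    by (rule sum.group) (use assms in auto)
  finally show ?thesis .
qed

lemma indicator_pair:
  assumes "finite S" "c \<in> S"
  shows "(\<Sum>x\<in>S. of_bool (x = c) * (F x :: int)) = F c"
  using delta_sum[OF assms, of F] by (simp add: eq_commute mult.commute)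




lemma baer_aux:
  fixes L :: "('i \<Rightarrow> int) \<Rightarrow> 'q \<Rightarrow> int" and V :: "('i \<Rightarrow> int) \<Rightarrow> int"
    and Xs :: "('i \<Rightarrow> int) set" and N P :: int
  assumes closed: "\<And>x y k. x \<in> Xs \<Longrightarrow> y \<in> Xs \<Longrightarrow> (\<lambda>i. x i - k * y i) \<in> Xs"
    and Llin: "\<And>x y k j. x \<in> Xs \<Longrightarrow> y \<in> Xs \<Longrightarrow> L (\<lambda>i. x i - k * y i) j = L x j - k * L y j"
    and Vlin: "\<And>x y k. x \<in> Xs \<Longrightarrow> y \<in> Xs \<Longrightarrow> V (\<lambda>i. x i - k * y i) = V x - k * V y"
    and cyc: "\<And>x. x \<in> Xs \<Longrightarrow> \<forall>j\<in>Qc. L x j = 0 \<Longrightarrow> P dvd V x"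
    and gen: "\<And>g. g \<in> Qc \<Longrightarrow> \<exists>x\<in>Xs. L x g = N \<and> (\<forall>j\<in>Qc. j \<noteq> g \<longrightarrow> L x j = 0)"
    and Npos: "N > 0" and Vdiv: "\<And>x. x \<in> Xs \<Longrightarrow> N ^ r dvd V x"
  shows "finite S \<Longrightarrow> S \<subseteq> Qc \<Longrightarrow> card S < r \<Longrightarrow>
    \<exists>C. (\<forall>g. N ^ (r - card S) dvd C g) \<and>
        (\<forall>x\<in>Xs. (\<forall>j\<in>Qc - S. L x j = 0) \<longrightarrow> P dvd (\<Sum>g\<in>S. C g * L x g) - V x)"
proof (induction S rule: finite_induct)
  case empty
  show ?case
    by (rule exI[of _ "\<lambda>_. 0"]) (auto intro: cyc simp: dvd_minus_iff)
next
  case (insert s S)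
  from insert.prems have sQ: "s \<in> Qc" and SQ: "S \<subseteq> Qc" and cS: "card S + 1 < r"
    using insert.hyps by auto
  from insert.IH SQ cS obtain C where
    Cdiv: "\<forall>g. N ^ (r - card S) dvd C g" and
    Cprop: "\<forall>x\<in>Xs. (\<forall>j\<in>Qc - S. L x j = 0) \<longrightarrow> P dvd (\<Sum>g\<in>S. C g * L x g) - V x"
    by auto
  define Jx where "Jx x \<longleftrightarrow> x \<in> Xs \<and> (\<forall>j\<in>Qc - insert s S. L x j = 0)" for x
  obtain xs where xs: "xs \<in> Xs" "L xs s = N" "\<forall>j\<in>Qc. j \<noteq> s \<longrightarrow> L xs j = 0"
    using gen[OF sQ] by blast
  have Jxs: "Jx xs" using xs by (auto simp: Jx_def)
  define Pm where "Pm n \<longleftrightarrow> 0 < n \<and> (\<exists>x. Jx x \<and> L x s = int n)" for n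
  have PN: "Pm (nat N)" using Jxs xs Npos by (auto simp: Pm_def)
  define m where "m = (LEAST n. Pm n)"
  have Pmm: "Pm m" unfolding m_def by (rule LeastI[of Pm, OF PN])
  have mmin: "\<And>n. n < m \<Longrightarrow> \<not> Pm n" unfolding m_def by (rule not_less_Least)
  from Pmm obtain x0 where x0: "Jx x0" "L x0 s = int m" and mpos: "0 < m" by (auto simp: Pm_def)
  have x0X: "x0 \<in> Xs" using x0 by (simp add: Jx_def)
  have mdvd: "int m dvd L x s" if "Jx x" for x
  proof -
    define j where "j = L x s"
    define x' where "x' = (\<lambda>i. x i - (j div int m) * x0 i)"
    have xX: "x \<in> Xs" using that by (simp add: Jx_def)
    have "Jx x'"
      using that x0 xX x0X unfolding Jx_def x'_def by (auto intro: closed simp: Llin)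
    moreover have "L x' s = j mod int m"
    proof -
      have "L x' s = j - (j div int m) * int m" unfolding x'_def using xX x0X x0 by (simp add: Llin j_def)
      then show ?thesis by (simp add: minus_div_mult_eq_mod)
    qed
    ultimately have JJ: "Jx x' \<and> L x' s = int (nat (j mod int m))" using mpos by simp
    have jm: "j mod int m < int m" "0 \<le> j mod int m" using mpos by auto
    have "j mod int m = 0"
    proof (rule ccontr)
      assume ne: "j mod int m \<noteq> 0"
      have lt: "nat (j mod int m) < m" using \<open>j mod int m < int m\<close> \<open>0 \<le> j mod int m\<close> by linarith
      have "0 < nat (j mod int m)" using ne \<open>0 \<le> j mod int m\<close> by linarith
      then have "Pm (nat (j mod int m))" using \<open>Jx x' \<and> L x' s = int (nat (j mod int m))\<close> unfolding Pm_def by blast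
      with mmin[OF lt] show False by blast
    qed
    then show ?thesis unfolding j_def by (simp add: dvd_eq_mod_eq_0)
  qed
  have mN: "int m dvd N" using mdvd[OF Jxs] xs by simp
  define k0 where "k0 = r - card (insert s S)"
  have rk: "r - card S = Suc k0" using cS insert.hyps by (simp add: k0_def)
  define y where "y = V x0 - (\<Sum>g\<in>S. C g * L x0 g)"
  have "N ^ (r - card S) dvd y"
    unfolding y_def
  proof (rule dvd_diff)
    show "N ^ (r - card S) dvd V x0"
      using Vdiv[OF x0X] by (meson diff_le_self dvd_trans le_imp_power_dvd)
    show "N ^ (r - card S) dvd (\<Sum>g\<in>S. C g * L x0 g)"
      using Cdiv by (intro dvd_sum) auto
  qed
  then have "int m * N ^ k0 dvd y" using rk mN
    by (metis dvd_trans mult_dvd_mono dvd_refl power_Suc)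
  then obtain e where ye: "y = int m * N ^ k0 * e" by (elim dvdE)
  define d where "d = N ^ k0 * e"
  have yd: "y = int m * d" using ye by (simp add: d_def)
  define C' where "C' = C(s := d)"
  show ?case
  proof (rule exI[of _ C'], intro conjI ballI impI allI)
    fix g
    show "N ^ (r - card (insert s S)) dvd C' g"
    proof (cases "g = s")
      case True then show ?thesis by (simp add: C'_def d_def k0_def[symmetric])
    next
      case False
      have "N ^ k0 dvd N ^ (r - card S)" using rk by simp
      then show ?thesis using Cdiv False by (auto simp: C'_def k0_def[symmetric] intro: dvd_trans)
    qed
  next
    fix x assume xX: "x \<in> Xs" and xz: "\<forall>j\<in>Qc - insert s S. L x j = 0"
    have "Jx x" using xX xz by (simp add: Jx_def)
    from mdvd[OF this] obtain k where k: "L x s = int m * k" by (elim dvdE)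
    define x' where "x' = (\<lambda>i. x i - k * x0 i)"
    have x'Xs: "x' \<in> Xs" unfolding x'_def using xX x0X by (rule closed)
    have "\<forall>j\<in>Qc - S. L x' j = 0"
    proof
      fix j assume j: "j \<in> Qc - S"
      show "L x' j = 0"
      proof (cases "j = s")
        case True then show ?thesis unfolding x'_def using xX x0X k x0 by (simp add: Llin)
      next
        case False
        then have "L x j = 0" "L x0 j = 0" using j xz x0 by (auto simp: Jx_def)
        then show ?thesis unfolding x'_def using xX x0X by (simp add: Llin)
      qed
    qed
    with Cprop x'Xs have "P dvd (\<Sum>g\<in>S. C g * L x' g) - V x'" by blast
    also have "(\<Sum>g\<in>S. C g * L x' g) - V x' = (\<Sum>g\<in>S. C g * L x g) - V x + k * y"
      unfolding x'_def y_def using xX x0X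
      by (simp add: Llin Vlin algebra_simps sum_subtractf sum_distrib_left)
    also have "\<dots> = (\<Sum>g\<in>insert s S. C' g * L x g) - V x"
    proof -
      have "(\<Sum>g\<in>S. C' g * L x g) = (\<Sum>g\<in>S. C g * L x g)"
        using insert.hyps by (intro sum.cong) (auto simp: C'_def)
      then show ?thesis using insert.hyps yd k by (simp add: C'_def algebra_simps)
    qed
    finally show "P dvd (\<Sum>g\<in>insert s S. C' g * L x g) - V x" .
  qed
qed




lemma decomp_nat:
  fixes p n :: nat
  assumes "Factorial_Ring.prime p" "n > 0"
  obtains n' where "n = p ^ multiplicity p n * n'" "\<not> p dvd n'"
  using multiplicity_decompose'[of n p] assms by (metis not_prime_unit neq0_conv)

lemma coprime_int_pow:
  fixes p n' :: nat
  assumes "Factorial_Ring.prime p" "\<not> p dvd n'"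
  shows "coprime (int p ^ b) (int n')"
proof -
  have "coprime p n'" using assms by (simp add: prime_imp_coprime)
  then have "coprime (p ^ b) n'" by simp
  then show ?thesis by (metis coprime_int_iff of_nat_power)
qed

lemma nt_rep:
  fixes p n R :: nat and k :: int
  assumes p: "Factorial_Ring.prime p" and n: "n > 0" and R: "R > 0"
    and dv: "int p ^ multiplicity p (n*R) dvd k * int n"
  shows "\<exists>j. int p ^ multiplicity p (n*R) dvd int R * j - k"
proof -
  define a where "a = multiplicity p n"
  define b where "b = multiplicity p R"
  have mult: "multiplicity p (n*R) = a + b"
    unfolding a_def b_def using p n R by (simp add: prime_elem_multiplicity_mult_distrib)
  obtain n' where n': "n = p ^ a * n'" "\<not> p dvd n'" using decomp_nat[OF p n] a_def by blast
  obtain R' where R': "R = p ^ b * R'" "\<not> p dvd R'" using decomp_nat[OF p R] b_def by blast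
  have "int p ^ a * int p ^ b dvd int p ^ a * (k * int n')"
    using dv mult n' by (simp add: power_add algebra_simps)
  then have "int p ^ b dvd k * int n'"
    using p by (simp add: prime_gt_0_nat)
  then have "int p ^ b dvd k"
    using coprime_int_pow[OF p n'(2)] by (simp add: coprime_dvd_mult_left_iff)
  then obtain k' where k': "k = int p ^ b * k'" by (elim dvdE)
  have cop: "coprime (int R') (int p ^ a)" using coprime_int_pow[OF p R'(2)] by (simp add: ac_simps)
  obtain s t where st: "s * int R' + t * int p ^ a = 1"
    using bezout_int[of "int R'" "int p ^ a"] cop by auto
  have "int R * (s * k') - k = int p ^ b * k' * (s * int R' - 1)"
    using R' k' by (simp add: algebra_simps)
  also have "\<dots> = int p ^ b * k' * (- t * int p ^ a)"
  proof -
    have "s * int R' - 1 = - t * int p ^ a" using st by linarith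
    then show ?thesis by simp
  qed
  also have "\<dots> = int p ^ (a + b) * (- k' * t)" by (simp add: power_add algebra_simps)
  finally show ?thesis using mult by (intro exI[of _ "s * k'"]) simp
qed




lemma rep_lemma:
  assumes cA: "comm_group A" and p: "Factorial_Ring.prime p" and n: "n > 0" and R: "R > 0"
    and card: "card (torsion_part A (n*R)) = p ^ multiplicity p (n*R)"
    and wT: "w \<in> torsion_part A (n*R)" and gen: "torsion_part A (n*R) = generate A {w}"
  shows "group.ord A w = p ^ multiplicity p (n*R)"
    and "\<And>y. y \<in> carrier A \<Longrightarrow> y [^]\<^bsub>A\<^esub> n = \<one>\<^bsub>A\<^esub> \<Longrightarrow> \<exists>j. y = w [^]\<^bsub>A\<^esub> (int R * j)"
proof -
  interpret A: comm_group A by fact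
  have wc: "w \<in> carrier A" using wT by (simp add: torsion_part_def)
  show ordw: "A.ord w = p ^ multiplicity p (n*R)"
    using A.generate_pow_card[OF wc] gen card by simp
  fix y assume y: "y \<in> carrier A" "y [^]\<^bsub>A\<^esub> n = \<one>\<^bsub>A\<^esub>"
  have "y [^]\<^bsub>A\<^esub> (n*R) = \<one>\<^bsub>A\<^esub>" using y by (simp add: A.nat_pow_pow[symmetric])
  then have "y \<in> torsion_part A (n*R)" using y by (simp add: torsion_part_def)
  then have "y \<in> generate A {w}" using gen by simp
  then obtain k :: int where k: "y = w [^]\<^bsub>A\<^esub> k" using A.generate_pow[OF wc] by auto
  have "w [^]\<^bsub>A\<^esub> (k * int n) = \<one>\<^bsub>A\<^esub>"
    using y k wc by (simp add: A.int_pow_pow[symmetric] int_pow_int)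
  then have "int (A.ord w) dvd k * int n" using A.int_pow_eq_id[OF wc] by simp
  then have "int p ^ multiplicity p (n*R) dvd k * int n" using ordw by simp
  from nt_rep[OF p n R this] obtain j where "int p ^ multiplicity p (n*R) dvd int R * j - k" by blast
  then have "w [^]\<^bsub>A\<^esub> k = w [^]\<^bsub>A\<^esub> (int R * j)"
    using A.int_pow_eq[OF wc] ordw by simp
  then show "\<exists>j. y = w [^]\<^bsub>A\<^esub> (int R * j)" using k by blast
qed




lemma (in group) cancel_inv_left: "a \<in> carrier G \<Longrightarrow> x \<in> carrier G \<Longrightarrow> inv a \<otimes> (a \<otimes> x) = x"
  by (simp add: m_assoc[symmetric])

lemma extend_phi:
  fixes G :: "'g monoid" and A :: "'a monoid" and \<phi> :: "'g \<Rightarrow> 'a"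
  assumes p: "Factorial_Ring.prime p" and Gg: "group G" and finG: "finite (carrier G)"
    and nK: "K \<lhd> G" and cA: "comm_group A" and hyp: "hypothesis_p p A"
    and phic: "\<And>k. k \<in> K \<Longrightarrow> \<phi> k \<in> carrier A"
    and phim: "\<And>k1 k2. k1 \<in> K \<Longrightarrow> k2 \<in> K \<Longrightarrow> \<phi> (k1 \<otimes>\<^bsub>G\<^esub> k2) = \<phi> k1 \<otimes>\<^bsub>A\<^esub> \<phi> k2"
    and phiinv: "\<And>x k. x \<in> carrier G \<Longrightarrow> k \<in> K \<Longrightarrow> \<phi> (x \<otimes>\<^bsub>G\<^esub> k \<otimes>\<^bsub>G\<^esub> inv\<^bsub>G\<^esub> x) = \<phi> k"
    and cond: "schur_p_part_trivial p (G Mod K) \<or> coinflation_p_surjective p G K"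
  shows "\<exists>a \<in> hom G A. \<forall>k\<in>K. a k = \<phi> k"
proof -
  interpret G: group G by fact
  interpret NK: normal K G by fact
  interpret A: comm_group A by fact
  have subK: "subgroup K G" by (rule NK.subgroup_axioms)
  have Kc: "K \<subseteq> carrier G" using subK by (rule subgroup.subset)
  define Q where "Q = G Mod K"
  have Qg: "group Q" unfolding Q_def by (rule NK.factorgroup_is_group)
  interpret Q: group Q by fact
  have carrQ: "carrier Q = (\<lambda>x. K #>\<^bsub>G\<^esub> x) ` carrier G" unfolding Q_def by (rule carrier_FactGroup)
  have finQ: "finite (carrier Q)" using finG carrQ by simp
  define N where "N = card (carrier Q)"
  have Npos: "N > 0" unfolding N_def using finQ Q.one_closed by (auto simp: card_gt_0_iff)
  define \<pi> where "\<pi> = (\<lambda>g. K #>\<^bsub>G\<^esub> g)"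
  have piQ: "\<And>g. g \<in> carrier G \<Longrightarrow> \<pi> g \<in> carrier Q" using carrQ by (simp add: \<pi>_def)
  have pim: "\<And>g h. g \<in> carrier G \<Longrightarrow> h \<in> carrier G \<Longrightarrow> \<pi> (g \<otimes>\<^bsub>G\<^esub> h) = \<pi> g \<otimes>\<^bsub>Q\<^esub> \<pi> h"
    by (simp add: \<pi>_def Q_def NK.rcos_sum)
  have oneQ: "\<one>\<^bsub>Q\<^esub> = K" by (simp add: Q_def)
  define s where "s q = (if q = K then \<one>\<^bsub>G\<^esub> else (SOME g. g \<in> carrier G \<and> q = \<pi> g))" for q
  have s: "s q \<in> carrier G \<and> \<pi> (s q) = q" if q: "q \<in> carrier Q" for q
  proof (cases "q = K")
    case True then show ?thesis by (simp add: s_def \<pi>_def Kc)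
  next
    case False
    from q carrQ obtain g where "g \<in> carrier G \<and> q = \<pi> g" by (auto simp: \<pi>_def)
    then have "(SOME g. g \<in> carrier G \<and> q = \<pi> g) \<in> carrier G \<and> q = \<pi> (SOME g. g \<in> carrier G \<and> q = \<pi> g)"
      by (rule someI)
    then show ?thesis using False by (simp add: s_def)
  qed
  have sK: "s K = \<one>\<^bsub>G\<^esub>" by (simp add: s_def)
  have cos: "a \<otimes>\<^bsub>G\<^esub> inv\<^bsub>G\<^esub> b \<in> K" if ab: "a \<in> carrier G" "b \<in> carrier G" "\<pi> a = \<pi> b" for a b
  proof -
    have "a \<in> K #>\<^bsub>G\<^esub> b" using G.rcos_self[OF ab(1) subK] ab(3) by (simp add: \<pi>_def)
    then obtain k where k: "k \<in> K" "a = k \<otimes>\<^bsub>G\<^esub> b" by (auto simp: r_coset_def)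
    then have "a \<otimes>\<^bsub>G\<^esub> inv\<^bsub>G\<^esub> b = k" using ab Kc by (auto simp: G.m_assoc)
    then show ?thesis using k by simp
  qed
  define \<kappa> where "\<kappa> g = g \<otimes>\<^bsub>G\<^esub> inv\<^bsub>G\<^esub> (s (\<pi> g))" for g
  have kappaK: "\<kappa> g \<in> K" if "g \<in> carrier G" for g
    unfolding \<kappa>_def using that s[OF piQ[OF that]] by (intro cos) auto
  define t where "t q1 q2 = s q1 \<otimes>\<^bsub>G\<^esub> s q2 \<otimes>\<^bsub>G\<^esub> inv\<^bsub>G\<^esub> (s (q1 \<otimes>\<^bsub>Q\<^esub> q2))" for q1 q2
  have tK: "t q1 q2 \<in> K" if "q1 \<in> carrier Q" "q2 \<in> carrier Q" for q1 q2
    unfolding t_def using that s[OF that(1)] s[OF that(2)] s[OF Q.m_closed[OF that]]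
    by (intro cos) (auto simp: pim)
  define u where "u q1 q2 = \<phi> (t q1 q2)" for q1 q2
  have KI: "\<phi> (\<kappa> (g \<otimes>\<^bsub>G\<^esub> h)) = \<phi> (\<kappa> g) \<otimes>\<^bsub>A\<^esub> \<phi> (\<kappa> h) \<otimes>\<^bsub>A\<^esub> u (\<pi> g) (\<pi> h)"
    if gh: "g \<in> carrier G" "h \<in> carrier G" for g h
  proof -
    define a where "a = s (\<pi> g)"
    define b where "b = s (\<pi> h)"
    define c where "c = s (\<pi> g \<otimes>\<^bsub>Q\<^esub> \<pi> h)"
    have abc: "a \<in> carrier G" "b \<in> carrier G" "c \<in> carrier G"
      unfolding a_def b_def c_def using s piQ gh Q.m_closed by auto
    have conjK: "a \<otimes>\<^bsub>G\<^esub> \<kappa> h \<otimes>\<^bsub>G\<^esub> inv\<^bsub>G\<^esub> a \<in> K"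
      using NK.inv_op_closed2[OF abc(1) kappaK[OF gh(2)]] .
    have eq: "\<kappa> (g \<otimes>\<^bsub>G\<^esub> h) = \<kappa> g \<otimes>\<^bsub>G\<^esub> (a \<otimes>\<^bsub>G\<^esub> \<kappa> h \<otimes>\<^bsub>G\<^esub> inv\<^bsub>G\<^esub> a) \<otimes>\<^bsub>G\<^esub> t (\<pi> g) (\<pi> h)"
      unfolding \<kappa>_def t_def using gh abc
      by (simp add: pim a_def[symmetric] b_def[symmetric] c_def[symmetric] G.m_assoc G.cancel_inv_left)
    have "\<phi> (\<kappa> (g \<otimes>\<^bsub>G\<^esub> h)) = \<phi> (\<kappa> g) \<otimes>\<^bsub>A\<^esub> \<phi> (a \<otimes>\<^bsub>G\<^esub> \<kappa> h \<otimes>\<^bsub>G\<^esub> inv\<^bsub>G\<^esub> a) \<otimes>\<^bsub>A\<^esub> \<phi> (t (\<pi> g) (\<pi> h))"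
      unfolding eq using kappaK[OF gh(1)] conjK tK[OF piQ[OF gh(1)] piQ[OF gh(2)]]
      by (simp add: phim subgroup.m_closed[OF subK])
    then show ?thesis using phiinv[OF abc(1) kappaK[OF gh(2)]] by (simp add: u_def)
  qed
  have phi1: "\<phi> \<one>\<^bsub>G\<^esub> = \<one>\<^bsub>A\<^esub>"
  proof -
    have "\<phi> \<one>\<^bsub>G\<^esub> \<otimes>\<^bsub>A\<^esub> \<phi> \<one>\<^bsub>G\<^esub> = \<phi> \<one>\<^bsub>G\<^esub>"
      using phim[of "\<one>\<^bsub>G\<^esub>" "\<one>\<^bsub>G\<^esub>"] subgroup.one_closed[OF subK] by simp
    then show ?thesis using phic[OF subgroup.one_closed[OF subK]] by simp
  qed
  define kK where "kK = order G"
  have kKpos: "kK > 0" unfolding kK_def order_def using finG G.one_closed by (auto simp: card_gt_0_iff)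
  have phipow: "\<phi> (k [^]\<^bsub>G\<^esub> n) = \<phi> k [^]\<^bsub>A\<^esub> n" if k: "k \<in> K" for k and n :: nat
  proof (induction n)
    case 0 then show ?case using phi1 by simp
  next
    case (Suc n)
    have "k [^]\<^bsub>G\<^esub> n \<in> K"
      using k subK by (metis int_pow_int G.subgroup_int_pow_closed)
    then show ?case using Suc k by (simp add: phim)
  qed
  have phitors: "\<phi> k [^]\<^bsub>A\<^esub> kK = \<one>\<^bsub>A\<^esub>" if k: "k \<in> K" for k
  proof -
    have "k [^]\<^bsub>G\<^esub> kK = \<one>\<^bsub>G\<^esub>" unfolding kK_def using k Kc by (intro G.pow_order_eq_1) auto
    then show ?thesis using phipow[OF k, of kK] phi1 by simp
  qed
  define r where "r = Suc N"
  define R where "R = N ^ r"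
  have Rpos: "R > 0" using Npos by (simp add: R_def)
  define M where "M = kK * R"
  have Mpos: "M > 0" using kKpos Rpos by (simp add: M_def)
  from hyp Mpos obtain w where
      finT: "finite (torsion_part A M)" and cardT: "card (torsion_part A M) = p ^ multiplicity p M"
      and wT: "w \<in> torsion_part A M" and genT: "torsion_part A M = generate A {w}"
    unfolding hypothesis_p_def by blast
  have wc: "w \<in> carrier A" using wT by (simp add: torsion_part_def)
  note RL = rep_lemma[OF cA p kKpos Rpos cardT[unfolded M_def] wT[unfolded M_def] genT[unfolded M_def]]
  define P where "P = int (A.ord w)"
  have Ppow: "P = int p ^ multiplicity p M" using RL(1) by (simp add: P_def M_def)
  have weq: "w [^]\<^bsub>A\<^esub> i = w [^]\<^bsub>A\<^esub> j \<longleftrightarrow> P dvd j - i" for i j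
    using A.int_pow_eq[OF wc] by (simp add: P_def)
  define rep where "rep y = int R * (SOME j. y = w [^]\<^bsub>A\<^esub> (int R * j))" for y
  have rep: "w [^]\<^bsub>A\<^esub> rep y = y" if "y \<in> carrier A" "y [^]\<^bsub>A\<^esub> kK = \<one>\<^bsub>A\<^esub>" for y
  proof -
    from RL(2)[OF that] have "\<exists>j. y = w [^]\<^bsub>A\<^esub> (int R * j)" .
    then have "y = w [^]\<^bsub>A\<^esub> (int R * (SOME j. y = w [^]\<^bsub>A\<^esub> (int R * j)))" by (rule someI_ex)
    then show ?thesis by (simp add: rep_def)
  qed
  have repdvd: "int R dvd rep y" for y by (simp add: rep_def)
  define U where "U q = rep (u (fst q) (snd q))" for q
  define E where "E g = rep (\<phi> (\<kappa> g))" for g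
  have wU: "w [^]\<^bsub>A\<^esub> U (a,b) = u a b" if "a \<in> carrier Q" "b \<in> carrier Q" for a b
    unfolding U_def u_def using tK[OF that] by (simp add: rep phic phitors)
  have wE: "w [^]\<^bsub>A\<^esub> E g = \<phi> (\<kappa> g)" if "g \<in> carrier G" for g
    unfolding E_def using kappaK[OF that] by (simp add: rep phic phitors)
  have KIint: "P dvd E (g \<otimes>\<^bsub>G\<^esub> h) - (E g + E h + U (\<pi> g, \<pi> h))"
    if gh: "g \<in> carrier G" "h \<in> carrier G" for g h
  proof -
    have "w [^]\<^bsub>A\<^esub> (E g + E h + U (\<pi> g, \<pi> h)) = w [^]\<^bsub>A\<^esub> E (g \<otimes>\<^bsub>G\<^esub> h)"
      using KI[OF gh] wE gh wU[OF piQ[OF gh(1)] piQ[OF gh(2)]] wc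
      by (simp add: A.int_pow_mult)
    then show ?thesis using weq by blast
  qed
  have cocyc: "P dvd U (b, c) - U (a \<otimes>\<^bsub>Q\<^esub> b, c) + U (a, b \<otimes>\<^bsub>Q\<^esub> c) - U (a, b)"
    if abc: "a \<in> carrier Q" "b \<in> carrier Q" "c \<in> carrier Q" for a b c
  proof -
    define g where "g = s a"
    define h where "h = s b"
    define k where "k = s c"
    have ghk: "g \<in> carrier G" "h \<in> carrier G" "k \<in> carrier G" "\<pi> g = a" "\<pi> h = b" "\<pi> k = c"
      using s abc by (auto simp: g_def h_def k_def)
    have d1: "P dvd E (h \<otimes>\<^bsub>G\<^esub> k) - (E h + E k + U (b, c))" using KIint[of h k] ghk by simp
    have d2: "P dvd E (g \<otimes>\<^bsub>G\<^esub> h \<otimes>\<^bsub>G\<^esub> k) - (E (g \<otimes>\<^bsub>G\<^esub> h) + E k + U (a \<otimes>\<^bsub>Q\<^esub> b, c))"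
      using KIint[of "g \<otimes>\<^bsub>G\<^esub> h" k] ghk by (simp add: pim)
    have d3: "P dvd E (g \<otimes>\<^bsub>G\<^esub> (h \<otimes>\<^bsub>G\<^esub> k)) - (E g + E (h \<otimes>\<^bsub>G\<^esub> k) + U (a, b \<otimes>\<^bsub>Q\<^esub> c))"
      using KIint[of g "h \<otimes>\<^bsub>G\<^esub> k"] ghk by (simp add: pim)
    have d4: "P dvd E (g \<otimes>\<^bsub>G\<^esub> h) - (E g + E h + U (a, b))" using KIint[of g h] ghk by simp
    have assoc: "g \<otimes>\<^bsub>G\<^esub> h \<otimes>\<^bsub>G\<^esub> k = g \<otimes>\<^bsub>G\<^esub> (h \<otimes>\<^bsub>G\<^esub> k)" using ghk by (simp add: G.m_assoc)
    have "P dvd - (E (h \<otimes>\<^bsub>G\<^esub> k) - (E h + E k + U (b, c)))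
       + (E (g \<otimes>\<^bsub>G\<^esub> h \<otimes>\<^bsub>G\<^esub> k) - (E (g \<otimes>\<^bsub>G\<^esub> h) + E k + U (a \<otimes>\<^bsub>Q\<^esub> b, c)))
       - (E (g \<otimes>\<^bsub>G\<^esub> (h \<otimes>\<^bsub>G\<^esub> k)) - (E g + E (h \<otimes>\<^bsub>G\<^esub> k) + U (a, b \<otimes>\<^bsub>Q\<^esub> c)))
       + (E (g \<otimes>\<^bsub>G\<^esub> h) - (E g + E h + U (a, b)))"
    proof -
      have m1: "P dvd - (E (h \<otimes>\<^bsub>G\<^esub> k) - (E h + E k + U (b, c)))" using d1 by (simp only: dvd_minus_iff)
      show ?thesis by (rule dvd_add[OF dvd_diff[OF dvd_add[OF m1 d2] d3] d4])
    qed
    then show ?thesis using assoc by (simp add: algebra_simps)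
  qed
  define V where "V x = (\<Sum>q\<in>carrier Q \<times> carrier Q. U q * x q)" for x :: "'g set \<times> 'g set \<Rightarrow> int"
  have Vbd3: "P dvd V (bd3 Q d)" for d
  proof -
    have "V (bd3 Q d) = (\<Sum>(a,b,c)\<in>carrier Q \<times> carrier Q \<times> carrier Q. d (a,b,c) *
        (U (b,c) - U (a \<otimes>\<^bsub>Q\<^esub> b, c) + U (a, b \<otimes>\<^bsub>Q\<^esub> c) - U (a,b)))"
      unfolding V_def by (rule bd3_pair[OF Qg finQ])
    also have "P dvd \<dots>"
      by (intro dvd_sum) (auto intro!: dvd_mult cocyc)
    finally show ?thesis .
  qed
  have Vlin: "V (\<lambda>i. x i - k * y i) = V x - k * V y" for x y k
    unfolding V_def by (simp add: sum_subtractf sum_distrib_left algebra_simps)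
  have Vscale: "V (\<lambda>i. k * y i) = k * V y" for y k
    unfolding V_def by (simp add: sum_distrib_left algebra_simps)
  have Vcm: "P dvd V (chain_map2 G \<pi> z)" if z: "z \<in> cycles2 G" for z
  proof -
    have bz: "bd2 G z = (\<lambda>_. 0)" using z by (simp add: cycles2_def)
    have "V (chain_map2 G \<pi> z) = (\<Sum>x\<in>carrier G \<times> carrier G. z x * U (\<pi> (fst x), \<pi> (snd x)))"
      unfolding V_def by (rule chain_map_pair[OF finG finQ piQ])
    also have "\<dots> = (\<Sum>x\<in>carrier G \<times> carrier G. z x * (U (\<pi> (fst x), \<pi> (snd x)) + E (snd x) - E (fst x \<otimes>\<^bsub>G\<^esub> snd x) + E (fst x)))
          - (\<Sum>(g,h)\<in>carrier G \<times> carrier G. z (g,h) * (E h - E (g \<otimes>\<^bsub>G\<^esub> h) + E g))"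
      by (simp add: case_prod_beta sum_subtractf[symmetric] algebra_simps)
    also have "(\<Sum>(g,h)\<in>carrier G \<times> carrier G. z (g,h) * (E h - E (g \<otimes>\<^bsub>G\<^esub> h) + E g)) = 0"
      using bd2_pair[OF Gg finG, of E z] bz by simp
    also have "P dvd (\<Sum>x\<in>carrier G \<times> carrier G. z x * (U (\<pi> (fst x), \<pi> (snd x)) + E (snd x) - E (fst x \<otimes>\<^bsub>G\<^esub> snd x) + E (fst x))) - 0"
    proof -
      have "P dvd z x * (U (\<pi> (fst x), \<pi> (snd x)) + E (snd x) - E (fst x \<otimes>\<^bsub>G\<^esub> snd x) + E (fst x))"
        if "x \<in> carrier G \<times> carrier G" for x
      proof -
        have "P dvd E (fst x \<otimes>\<^bsub>G\<^esub> snd x) - (E (fst x) + E (snd x) + U (\<pi> (fst x), \<pi> (snd x)))"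
          using that by (intro KIint) auto
        then have "P dvd U (\<pi> (fst x), \<pi> (snd x)) + E (snd x) - E (fst x \<otimes>\<^bsub>G\<^esub> snd x) + E (fst x)"
          by (metis (no_types, lifting) dvd_minus_iff minus_diff_eq add.commute add.left_commute diff_diff_eq2 diff_add_eq)
        then show ?thesis by (rule dvd_mult)
      qed
      then show ?thesis by (simp add: dvd_sum)
    qed
    finally show ?thesis .
  qed
  have allcyc: "P dvd V x" if x: "x \<in> cycles2 Q" for x
  proof -
    have xc: "x \<in> chains2 Q" and bx: "bd2 Q x = (\<lambda>_. 0)" using x by (auto simp: cycles2_def)
    define v where "v = multiplicity p N"
    obtain N' where N': "N = p ^ v * N'" "\<not> p dvd N'" using decomp_nat[OF p Npos] v_def by blast
    define w' where "w' = (\<lambda>y. int N' * x y)"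
    have w'cyc: "w' \<in> cycles2 Q"
    proof -
      have "w' \<in> chains2 Q" using xc by (auto simp: chains2_def w'_def)
      moreover have "bd2 Q w' = (\<lambda>_. 0)" unfolding w'_def by (rule ext) (simp add: bd2_scale bx)
      ultimately show ?thesis by (simp add: cycles2_def)
    qed
    define d where "d = (\<lambda>(a,b,c). if (a,b,c) \<in> carrier Q \<times> carrier Q \<times> carrier Q then - x (a,b) else (0::int))"
    have dc: "d \<in> chains3 Q" by (auto simp: chains3_def d_def)
    have "(\<lambda>y. int p ^ v * w' y) = (\<lambda>y. int (card (carrier Q)) * x y)"
      using N'(1) by (simp add: w'_def N_def[symmetric] mult.assoc)
    also have "\<dots> = bd3 Q d" unfolding d_def by (rule cycle_mult_boundary[OF Qg finQ x])
    finally have bnd: "(\<lambda>y. int p ^ v * w' y) \<in> boundaries2 Q" using dc by (simp add: boundaries2_def)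
    have pp: "p_primary_cycle2 p Q w'" unfolding p_primary_cycle2_def using w'cyc bnd by blast
    have "P dvd V w'"
    proof (cases "schur_p_part_trivial p Q")
      case True
      then have "w' \<in> boundaries2 Q" using pp by (simp add: schur_p_part_trivial_def)
      then obtain d' where "w' = bd3 Q d'" by (auto simp: boundaries2_def)
      then show ?thesis using Vbd3 by simp
    next
      case False
      then have "coinflation_p_surjective p G K" using cond by (simp add: Q_def)
      then obtain z where z: "p_primary_cycle2 p G z" "homologous2 Q (chain_map2 G \<pi> z) w'"
        using pp unfolding coinflation_p_surjective_def Q_def[symmetric] \<pi>_def[symmetric] by blast
      from z(2) obtain d' where d': "(\<lambda>y. chain_map2 G \<pi> z y - w' y) = bd3 Q d'"
        by (auto simp: homologous2_def boundaries2_def)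
      have "V (\<lambda>y. chain_map2 G \<pi> z y - w' y) = V (chain_map2 G \<pi> z) - V w'"
        using Vlin[of "chain_map2 G \<pi> z" 1 w'] by simp
      then have "V w' = V (chain_map2 G \<pi> z) - V (bd3 Q d')" using d' by simp
      moreover have "P dvd V (chain_map2 G \<pi> z)"
        using z(1) by (intro Vcm) (simp add: p_primary_cycle2_def)
      ultimately show ?thesis using Vbd3 by simp
    qed
    then have "P dvd int N' * V x" using Vscale by (simp add: w'_def)
    moreover have "coprime P (int N')" using coprime_int_pow[OF p N'(2)] by (simp add: Ppow)
    ultimately show ?thesis by (simp add: coprime_dvd_mult_right_iff)
  qed
  have chclosed: "(\<lambda>i. x i - k * y i) \<in> chains2 Q" if "x \<in> chains2 Q" "y \<in> chains2 Q" for x y k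
    using that by (simp add: chains2_def)
  have "\<exists>C. (\<forall>g. int N ^ (r - card (carrier Q)) dvd C g) \<and>
        (\<forall>x\<in>chains2 Q. (\<forall>j\<in>carrier Q - carrier Q. bd2 Q x j = 0) \<longrightarrow>
            P dvd (\<Sum>g\<in>carrier Q. C g * bd2 Q x g) - V x)"
  proof (rule baer_aux[where Xs = "chains2 Q" and L = "bd2 Q" and V = V and Qc = "carrier Q" and N = "int N" and P = P and r = r])
    show "\<And>x y k. x \<in> chains2 Q \<Longrightarrow> y \<in> chains2 Q \<Longrightarrow> (\<lambda>i. x i - k * y i) \<in> chains2 Q" by (rule chclosed)
    show "\<And>x y k j. bd2 Q (\<lambda>i. x i - k * y i) j = bd2 Q x j - k * bd2 Q y j" by (rule bd2_lin[OF finQ])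
    show "\<And>x y k. V (\<lambda>i. x i - k * y i) = V x - k * V y" by (rule Vlin)
    show "P dvd V x" if "x \<in> chains2 Q" "\<forall>j\<in>carrier Q. bd2 Q x j = 0" for x
    proof -
      have "bd2 Q x = (\<lambda>_. 0)"
      proof
        fix j show "bd2 Q x j = 0" using that(2) bd2_outside[OF Qg, of j x] by (cases "j \<in> carrier Q") auto
      qed
      then show ?thesis using that(1) by (intro allcyc) (simp add: cycles2_def)
    qed
    show "\<exists>x\<in>chains2 Q. bd2 Q x g = int N \<and> (\<forall>j\<in>carrier Q. j \<noteq> g \<longrightarrow> bd2 Q x j = 0)"
      if g: "g \<in> carrier Q" for g
    proof (rule bexI[of _ "\<lambda>(a,b). of_bool (a = g \<and> b \<in> carrier Q)"])
      show "(\<lambda>(a,b). of_bool (a = g \<and> b \<in> carrier Q)) \<in> chains2 Q" using g by (auto simp: chains2_def)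
      show "bd2 Q (\<lambda>(a,b). of_bool (a = g \<and> b \<in> carrier Q)) g = int N \<and>
        (\<forall>j\<in>carrier Q. j \<noteq> g \<longrightarrow> bd2 Q (\<lambda>(a,b). of_bool (a = g \<and> b \<in> carrier Q)) j = 0)"
        using bd2_gen[OF Qg finQ g] g by (simp add: N_def)
    qed
    show "int N > 0" using Npos by simp
    show "int N ^ r dvd V x" for x
      unfolding V_def
    proof (intro dvd_sum)
      fix q show "int N ^ r dvd U q * x q"
        using repdvd[of "u (fst q) (snd q)"] by (simp add: U_def R_def dvd_mult2)
    qed
    show "finite (carrier Q)" by (rule finQ)
    show "carrier Q \<subseteq> carrier Q" by simp
    show "card (carrier Q) < r" by (simp add: r_def N_def)
  qed
  then obtain C where
    C: "\<And>x. x \<in> chains2 Q \<Longrightarrow> P dvd (\<Sum>g\<in>carrier Q. C g * bd2 Q x g) - V x" by auto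
  have Cprop: "P dvd (C a + C b - C (a \<otimes>\<^bsub>Q\<^esub> b)) - U (a, b)" if ab: "a \<in> carrier Q" "b \<in> carrier Q" for a b
  proof -
    define x where "x = (\<lambda>q. of_bool (q = (a,b)) :: int)"
    have xc: "x \<in> chains2 Q" using ab by (auto simp: chains2_def x_def)
    have "(\<Sum>g\<in>carrier Q. C g * bd2 Q x g) = (\<Sum>gh\<in>carrier Q \<times> carrier Q. x gh * (C (snd gh) - C (fst gh \<otimes>\<^bsub>Q\<^esub> snd gh) + C (fst gh)))"
      using bd2_pair[OF Qg finQ, of C x] by (simp add: case_prod_beta)
    also have "\<dots> = C b - C (a \<otimes>\<^bsub>Q\<^esub> b) + C a"
      unfolding x_def using indicator_pair[of "carrier Q \<times> carrier Q" "(a,b)" "\<lambda>gh. C (snd gh) - C (fst gh \<otimes>\<^bsub>Q\<^esub> snd gh) + C (fst gh)"] finQ ab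
      by simp
    finally have e1: "(\<Sum>g\<in>carrier Q. C g * bd2 Q x g) = C b - C (a \<otimes>\<^bsub>Q\<^esub> b) + C a" .
    have e2: "V x = U (a,b)"
      unfolding V_def x_def using delta_sum[of "carrier Q \<times> carrier Q" "(a,b)" U] finQ ab
      by (simp add: eq_commute)
    show ?thesis using C[OF xc] e1 e2 by (simp add: algebra_simps)
  qed
  define c where "c q = w [^]\<^bsub>A\<^esub> C q" for q
  have cc: "c q \<in> carrier A" for q using wc by (simp add: c_def)
  have uc: "u a b \<in> carrier A" if "a \<in> carrier Q" "b \<in> carrier Q" for a b
    unfolding u_def using phic tK that by simp
  have rel: "u a b \<otimes>\<^bsub>A\<^esub> c (a \<otimes>\<^bsub>Q\<^esub> b) = c a \<otimes>\<^bsub>A\<^esub> c b" if ab: "a \<in> carrier Q" "b \<in> carrier Q" for a b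
  proof -
    have "u a b \<otimes>\<^bsub>A\<^esub> c (a \<otimes>\<^bsub>Q\<^esub> b) = w [^]\<^bsub>A\<^esub> (U (a,b) + C (a \<otimes>\<^bsub>Q\<^esub> b))"
      using wU[OF ab] wc by (simp add: c_def A.int_pow_mult)
    also have "\<dots> = w [^]\<^bsub>A\<^esub> (C a + C b)"
      using Cprop[OF ab] weq by (simp add: algebra_simps)
    also have "\<dots> = c a \<otimes>\<^bsub>A\<^esub> c b" using wc by (simp add: c_def A.int_pow_mult)
    finally show ?thesis .
  qed
  define ah where "ah g = \<phi> (\<kappa> g) \<otimes>\<^bsub>A\<^esub> c (\<pi> g)" for g
  have ahc: "ah g \<in> carrier A" if "g \<in> carrier G" for g
    unfolding ah_def using phic kappaK that cc by simp
  have ahm: "ah (g \<otimes>\<^bsub>G\<^esub> h) = ah g \<otimes>\<^bsub>A\<^esub> ah h" if gh: "g \<in> carrier G" "h \<in> carrier G" for g h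
  proof -
    have "ah (g \<otimes>\<^bsub>G\<^esub> h) = \<phi> (\<kappa> g) \<otimes>\<^bsub>A\<^esub> \<phi> (\<kappa> h) \<otimes>\<^bsub>A\<^esub> (u (\<pi> g) (\<pi> h) \<otimes>\<^bsub>A\<^esub> c (\<pi> g \<otimes>\<^bsub>Q\<^esub> \<pi> h))"
      unfolding ah_def using KI[OF gh] gh phic kappaK uc piQ cc by (simp add: pim A.m_assoc)
    also have "\<dots> = \<phi> (\<kappa> g) \<otimes>\<^bsub>A\<^esub> \<phi> (\<kappa> h) \<otimes>\<^bsub>A\<^esub> (c (\<pi> g) \<otimes>\<^bsub>A\<^esub> c (\<pi> h))"
      using rel piQ gh by simp
    also have "\<dots> = ah g \<otimes>\<^bsub>A\<^esub> ah h"
      unfolding ah_def using gh phic kappaK cc by (simp add: A.m_ac)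
    finally show ?thesis .
  qed
  have ahhom: "ah \<in> hom G A" unfolding hom_def using ahc ahm by auto
  have cK: "c K = \<one>\<^bsub>A\<^esub>"
  proof -
    have KQ: "K \<in> carrier Q" using Q.one_closed oneQ by simp
    have KK: "K \<otimes>\<^bsub>Q\<^esub> K = K" using Q.l_one[OF KQ] oneQ by simp
    have "u K K = \<one>\<^bsub>A\<^esub>" unfolding u_def t_def using KK sK phi1 by simp
    then have "c K = c K \<otimes>\<^bsub>A\<^esub> c K" using rel[OF KQ KQ] KK cc by simp
    then show ?thesis using cc by simp
  qed
  have ahK: "ah k = \<phi> k" if k: "k \<in> K" for k
  proof -
    have kc: "k \<in> carrier G" using k Kc by auto
    have "\<pi> k = K" unfolding \<pi>_def using subgroup.rcos_const[OF subK Gg k] .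
    then have "\<kappa> k = k" unfolding \<kappa>_def using sK kc by simp
    then show ?thesis unfolding ah_def using \<open>\<pi> k = K\<close> cK phic[OF k] by simp
  qed
  show ?thesis using ahhom ahK by blast
qed




theorem theorem1p2:
  fixes p :: nat and G :: "'g monoid" and H :: "'h monoid" and U :: "('g \<times> 'h) set"
  assumes "Factorial_Ring.prime p"
    and "group G" and "group H" and "finite (carrier G)" and "finite (carrier H)"
    and "subdirect_product G H U"
    and "schur_p_part_trivial p (G Mod (k1 H U))
         \<or> coinflation_p_surjective p G (k1 H U)"
  shows "p_extensible p G H U TYPE('a)"
  unfolding p_extensible_def A_extensible_def
proof (intro allI impI ballI)
  fix A :: "'a monoid" and f
  assume Ahyp: "comm_group A \<and> hypothesis_p p A"
     and fhom: "f \<in> hom ((G \<times>\<times> H)\<lparr>carrier := U\<rparr>) A"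
  have p: "Factorial_Ring.prime p" and Gg: "group G" and Hg: "group H" and finG: "finite (carrier G)"
    using assms by auto
  have cA: "comm_group A" and hyp: "hypothesis_p p A" using Ahyp by auto
  interpret G: group G by fact
  interpret H: group H by fact
  interpret A: comm_group A by fact
  have GHg: "group (G \<times>\<times> H)" by (rule DirProd_group[OF Gg Hg])
  interpret GH: group "G \<times>\<times> H" by fact
  have subU: "subgroup U (G \<times>\<times> H)" and p1U: "p1 U = carrier G" and p2U: "p2 U = carrier H"
    using assms(6) by (auto simp: subdirect_product_def)
  have Ug: "group ((G \<times>\<times> H)\<lparr>carrier := U\<rparr>)" by (rule subgroup.subgroup_is_group[OF subU GHg])
  interpret fh: group_hom "(G \<times>\<times> H)\<lparr>carrier := U\<rparr>" A f
    using Ug cA fhom by (simp add: group_hom_def group_hom_axioms_def comm_group.axioms(2))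
  have Uc: "g \<in> carrier G \<and> h \<in> carrier H" if "(g,h) \<in> U" for g h
    using subgroup.subset[OF subU] that by (auto simp: carrier_DirProd)
  have fc: "f x \<in> carrier A" if "x \<in> U" for x using fh.hom_closed that by simp
  have fm: "f (x \<otimes>\<^bsub>G \<times>\<times> H\<^esub> y) = f x \<otimes>\<^bsub>A\<^esub> f y" if "x \<in> U" "y \<in> U" for x y
    using fh.hom_mult that by simp
  have Uinv: "inv\<^bsub>G \<times>\<times> H\<^esub> x \<in> U" if "x \<in> U" for x using subgroup.m_inv_closed[OF subU that] .
  have Umul: "x \<otimes>\<^bsub>G \<times>\<times> H\<^esub> y \<in> U" if "x \<in> U" "y \<in> U" for x y using subgroup.m_closed[OF subU that] .
  have finv: "f (inv\<^bsub>G \<times>\<times> H\<^esub> x) = inv\<^bsub>A\<^esub> f x" if "x \<in> U" for x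
    using fh.hom_inv[of x] that GH.m_inv_consistent[OF subU that] by simp
  have U1: "(\<one>\<^bsub>G\<^esub>, \<one>\<^bsub>H\<^esub>) \<in> U" using subgroup.one_closed[OF subU] by (simp add: one_DirProd)
  define K where "K = k1 H U"
  have Kdef: "K = {g. (g, \<one>\<^bsub>H\<^esub>) \<in> U}" by (simp add: K_def k1_def)
  have invp: "inv\<^bsub>G \<times>\<times> H\<^esub> (g,h) = (inv\<^bsub>G\<^esub> g, inv\<^bsub>H\<^esub> h)" if "(g,h) \<in> U" for g h
    using Uc[OF that] by (simp add: inv_DirProd[OF Gg Hg])
  have subK: "subgroup K G"
  proof (rule G.subgroupI)
    show "K \<subseteq> carrier G" using Uc by (auto simp: Kdef)
    show "K \<noteq> {}" using U1 by (auto simp: Kdef)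
    show "inv\<^bsub>G\<^esub> a \<in> K" if "a \<in> K" for a
      using Uinv[of "(a, \<one>\<^bsub>H\<^esub>)"] invp[of a "\<one>\<^bsub>H\<^esub>"] that by (simp add: Kdef)
    show "a \<otimes>\<^bsub>G\<^esub> b \<in> K" if "a \<in> K" "b \<in> K" for a b
      using Umul[of "(a, \<one>\<^bsub>H\<^esub>)" "(b, \<one>\<^bsub>H\<^esub>)"] that by (simp add: Kdef)
  qed
  have conjU: "(x \<otimes>\<^bsub>G\<^esub> k \<otimes>\<^bsub>G\<^esub> inv\<^bsub>G\<^esub> x, \<one>\<^bsub>H\<^esub>) = (x,y) \<otimes>\<^bsub>G \<times>\<times> H\<^esub> (k, \<one>\<^bsub>H\<^esub>) \<otimes>\<^bsub>G \<times>\<times> H\<^esub> inv\<^bsub>G \<times>\<times> H\<^esub> (x,y)"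
    if "(x,y) \<in> U" "k \<in> K" for x y k
    using that Uc[OF that(1)] by (simp add: invp Kdef)
  have nK: "K \<lhd> G"
    unfolding G.normal_inv_iff
  proof (intro conjI ballI subK)
    fix x k assume x: "x \<in> carrier G" and k: "k \<in> K"
    from x p1U obtain y where xy: "(x,y) \<in> U" by (auto simp: p1_def)
    have "(k, \<one>\<^bsub>H\<^esub>) \<in> U" using k by (simp add: Kdef)
    then have "(x,y) \<otimes>\<^bsub>G \<times>\<times> H\<^esub> (k, \<one>\<^bsub>H\<^esub>) \<otimes>\<^bsub>G \<times>\<times> H\<^esub> inv\<^bsub>G \<times>\<times> H\<^esub> (x,y) \<in> U"
      using xy by (intro Umul Uinv)
    then show "x \<otimes>\<^bsub>G\<^esub> k \<otimes>\<^bsub>G\<^esub> inv\<^bsub>G\<^esub> x \<in> K" using conjU[OF xy k] by (simp add: Kdef)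
  qed
  define \<phi> where "\<phi> k = f (k, \<one>\<^bsub>H\<^esub>)" for k
  have "\<exists>a \<in> hom G A. \<forall>k\<in>K. a k = \<phi> k"
  proof (rule extend_phi[OF p Gg finG nK cA hyp])
    show "\<phi> k \<in> carrier A" if "k \<in> K" for k using fc that by (simp add: \<phi>_def Kdef)
    show "\<phi> (k1 \<otimes>\<^bsub>G\<^esub> k2) = \<phi> k1 \<otimes>\<^bsub>A\<^esub> \<phi> k2" if "k1 \<in> K" "k2 \<in> K" for k1 k2
      using fm[of "(k1, \<one>\<^bsub>H\<^esub>)" "(k2, \<one>\<^bsub>H\<^esub>)"] that by (simp add: \<phi>_def Kdef)
    show "\<phi> (x \<otimes>\<^bsub>G\<^esub> k \<otimes>\<^bsub>G\<^esub> inv\<^bsub>G\<^esub> x) = \<phi> k" if x: "x \<in> carrier G" and k: "k \<in> K" for x k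
    proof -
      from x p1U obtain y where xy: "(x,y) \<in> U" by (auto simp: p1_def)
      have kU: "(k, \<one>\<^bsub>H\<^esub>) \<in> U" using k by (simp add: Kdef)
      have "\<phi> (x \<otimes>\<^bsub>G\<^esub> k \<otimes>\<^bsub>G\<^esub> inv\<^bsub>G\<^esub> x) = f (x,y) \<otimes>\<^bsub>A\<^esub> f (k, \<one>\<^bsub>H\<^esub>) \<otimes>\<^bsub>A\<^esub> inv\<^bsub>A\<^esub> f (x,y)"
        unfolding \<phi>_def conjU[OF xy k] fm[OF Umul[OF xy kU] Uinv[OF xy]] fm[OF xy kU] finv[OF xy] ..
      also have "\<dots> = f (k, \<one>\<^bsub>H\<^esub>)" using fc[OF xy] fc[OF kU]
        by (simp add: A.m_comm A.m_assoc[symmetric] A.r_inv)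
      finally show ?thesis by (simp add: \<phi>_def)
    qed
    show "schur_p_part_trivial p (G Mod K) \<or> coinflation_p_surjective p G K"
      using assms(7) by (simp add: K_def)
  qed
  then obtain a where ahom: "a \<in> hom G A" and aK: "\<And>k. k \<in> K \<Longrightarrow> a k = \<phi> k" by blast
  interpret ah: group_hom G A a using ahom cA by (simp add: group_hom_def group_hom_axioms_def Gg comm_group.axioms(2))
  define gs where "gs h = (SOME g. (g,h) \<in> U)" for h
  have gs: "(gs h, h) \<in> U" if "h \<in> carrier H" for h
  proof -
    from that p2U obtain g where "(g,h) \<in> U" by (auto simp: p2_def)
    then show ?thesis unfolding gs_def by (rule someI)
  qed
  define bh where "bh h = inv\<^bsub>A\<^esub> a (gs h) \<otimes>\<^bsub>A\<^esub> f (gs h, h)" for h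
  have bhc: "bh h \<in> carrier A" if "h \<in> carrier H" for h
    unfolding bh_def using gs[OF that] Uc fc by simp
  have indep: "f (g,h) = a g \<otimes>\<^bsub>A\<^esub> bh h" if gh: "(g,h) \<in> U" for g h
  proof -
    have hc: "h \<in> carrier H" and gc: "g \<in> carrier G" using Uc[OF gh] by auto
    define g' where "g' = gs h"
    have g'h: "(g',h) \<in> U" using gs[OF hc] by (simp add: g'_def)
    have g'c: "g' \<in> carrier G" using Uc[OF g'h] by simp
    have "(g,h) \<otimes>\<^bsub>G \<times>\<times> H\<^esub> inv\<^bsub>G \<times>\<times> H\<^esub> (g',h) \<in> U" using gh g'h by (intro Umul Uinv)
    then have dK: "g \<otimes>\<^bsub>G\<^esub> inv\<^bsub>G\<^esub> g' \<in> K" using g'h hc by (simp add: invp Kdef)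
    have eq: "(g,h) = (g \<otimes>\<^bsub>G\<^esub> inv\<^bsub>G\<^esub> g', \<one>\<^bsub>H\<^esub>) \<otimes>\<^bsub>G \<times>\<times> H\<^esub> (g',h)"
      using gc g'c hc by (simp add: G.m_assoc)
    have "f (g,h) = f (g \<otimes>\<^bsub>G\<^esub> inv\<^bsub>G\<^esub> g', \<one>\<^bsub>H\<^esub>) \<otimes>\<^bsub>A\<^esub> f (g',h)"
      using eq dK g'h by (metis Kdef fm mem_Collect_eq)
    also have "\<dots> = a (g \<otimes>\<^bsub>G\<^esub> inv\<^bsub>G\<^esub> g') \<otimes>\<^bsub>A\<^esub> f (g',h)" using aK[OF dK] by (simp add: \<phi>_def)
    also have "\<dots> = a g \<otimes>\<^bsub>A\<^esub> (inv\<^bsub>A\<^esub> a g' \<otimes>\<^bsub>A\<^esub> f (g',h))"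
      using gc g'c fc[OF g'h] by (simp add: A.m_assoc)
    finally show ?thesis by (simp add: bh_def g'_def)
  qed
  have bhm: "bh (h1 \<otimes>\<^bsub>H\<^esub> h2) = bh h1 \<otimes>\<^bsub>A\<^esub> bh h2" if h: "h1 \<in> carrier H" "h2 \<in> carrier H" for h1 h2
  proof -
    have u1: "(gs h1, h1) \<in> U" and u2: "(gs h2, h2) \<in> U" using gs h by auto
    have g1: "gs h1 \<in> carrier G" and g2: "gs h2 \<in> carrier G" using Uc u1 u2 by auto
    have u12: "(gs h1 \<otimes>\<^bsub>G\<^esub> gs h2, h1 \<otimes>\<^bsub>H\<^esub> h2) \<in> U" using Umul[OF u1 u2] by simp
    have "a (gs h1) \<otimes>\<^bsub>A\<^esub> a (gs h2) \<otimes>\<^bsub>A\<^esub> bh (h1 \<otimes>\<^bsub>H\<^esub> h2) = f (gs h1 \<otimes>\<^bsub>G\<^esub> gs h2, h1 \<otimes>\<^bsub>H\<^esub> h2)"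
      using indep[OF u12] g1 g2 by simp
    also have "\<dots> = f (gs h1, h1) \<otimes>\<^bsub>A\<^esub> f (gs h2, h2)" using fm[OF u1 u2] by simp
    also have "\<dots> = a (gs h1) \<otimes>\<^bsub>A\<^esub> a (gs h2) \<otimes>\<^bsub>A\<^esub> (bh h1 \<otimes>\<^bsub>A\<^esub> bh h2)"
      using indep[OF u1] indep[OF u2] g1 g2 bhc h by (simp add: A.m_ac)
    finally show ?thesis using g1 g2 bhc h H.m_closed by (simp add: A.l_cancel A.m_assoc)
  qed
  define F where "F x = a (fst x) \<otimes>\<^bsub>A\<^esub> bh (snd x)" for x
  have Fhom: "F \<in> hom (G \<times>\<times> H) A"
  proof (rule homI)
    show "F x \<in> carrier A" if "x \<in> carrier (G \<times>\<times> H)" for x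
      using that bhc by (auto simp: F_def carrier_DirProd)
    show "F (x \<otimes>\<^bsub>G \<times>\<times> H\<^esub> y) = F x \<otimes>\<^bsub>A\<^esub> F y" if "x \<in> carrier (G \<times>\<times> H)" "y \<in> carrier (G \<times>\<times> H)" for x y
      using that bhc by (auto simp: F_def carrier_DirProd mult_DirProd' bhm A.m_ac)
  qed
  have "\<forall>u\<in>U. F u = f u"
  proof
    fix u assume "u \<in> U"
    then show "F u = f u" using indep[of "fst u" "snd u"] by (simp add: F_def)
  qed
  with Fhom show "\<exists>F\<in>hom (G \<times>\<times> H) A. \<forall>u\<in>U. F u = f u" by blast
qed


end
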